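(* Let $\mathit{VI}$ be a finite set of variables with $\#\mathit{VI}=n$. For each $sh_1,sh_2\in\mathit{SH}$, each $\sigma\in\mathit{Subst}$ and each $k\in\mathbb{N}$ with $1\le k\le n$: if $\rho_{\mathit{TSD}_k}(sh_1)=\rho_{\mathit{TSD}_k}(sh_2)$ then $\rho_{\mathit{TSD}_k}(\mathrm{amgu}(sh_1,\sigma))=\rho_{\mathit{TSD}_k}(\mathrm{amgu}(sh_2,\sigma))$.
   Context: $\mathit{SG}=\wp(\mathit{VI})\setminus\{\emptyset\}$, $\mathit{SH}=\wp(\mathit{SG})$. $\rho_{\mathit{TSD}_k}(sh)=\{\,S\in\mathit{SG}\mid \forall T\subseteq S:\ \#T<k\implies S=\bigcup\{U\in sh\mid T\subseteq U\subseteq S\}\,\}$. $\mathit{Subst}$: idempotent substitutions (finite sets of bindings $x\mapsto t$ with $t\ne x$ a first-order term), with variables in $\mathit{VI}$; $\mathrm{vars}(t)$ is the set of variables of $t$. $\mathrm{bin}(sh_1,sh_2)=\{S_1\cup S_2\mid S_i\in sh_i\}$; $sh^\star=\{S\in\mathit{SG}\mid\exists sh'\subseteq sh: S=\bigcup sh'\}$; $\mathrm{rel}(V,sh)=\{S\in sh\mid S\cap V\ne\emptyset\}$; with $v_x=\{x\}$, $v_t=\mathrm{vars}(t)$, $v_{xt}=v_x\cup v_t$: $\mathrm{amgu}(sh,x\mapsto t)=(sh\setminus\mathrm{rel}(v_{xt},sh))\cup\mathrm{bin}(\mathrm{rel}(v_x,sh)^\star,\mathrm{rel}(v_t,sh)^\star)$;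 $\mathrm{amgu}(sh,\emptyset)=sh$, $\mathrm{amgu}(sh,\{x\mapsto t\}\cup\sigma)=\mathrm{amgu}(\mathrm{amgu}(sh,x\mapsto t),\sigma\setminus\{x\mapsto t\})$. *)

theory Defs
  imports Main
begin

datatype ('f, 'v) fterm = Var 'v | Fn 'f "('f, 'v) fterm list"

fun vars :: "('f, 'v) fterm \<Rightarrow> 'v set" where
  "vars (Var x) = {x}"
| "vars (Fn f ts) = (\<Union>t\<in>set ts. vars t)"

definition SG :: "'v set \<Rightarrow> 'v set set" where
  "SG VI = Pow VI - {{}}"

definition SH :: "'v set \<Rightarrow> 'v set set set" where
  "SH VI = Pow (SG VI)"

definition rho_TSD :: "'v set \<Rightarrow> nat \<Rightarrow> 'v set set \<Rightarrow> 'v set set" where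
  "rho_TSD VI k sh = {S \<in> SG VI. \<forall>T. T \<subseteq> S \<longrightarrow> card T < k \<longrightarrow>
       S = \<Union>{U \<in> sh. T \<subseteq> U \<and> U \<subseteq> S}}"

definition bin :: "'v set set \<Rightarrow> 'v set set \<Rightarrow> 'v set set" where
  "bin sh1 sh2 = {S1 \<union> S2 | S1 S2. S1 \<in> sh1 \<and> S2 \<in> sh2}"

definition star :: "'v set \<Rightarrow> 'v set set \<Rightarrow> 'v set set" where
  "star VI sh = {S \<in> SG VI. \<exists>sh'. sh' \<subseteq> sh \<and> S = \<Union>sh'}"

definition rel :: "'v set \<Rightarrow> 'v set set \<Rightarrow> 'v set set" where
  "rel V sh = {S \<in> sh. S \<inter> V \<noteq> {}}"

definition amgu1 :: "'v set \<Rightarrow> 'v set set \<Rightarrow> 'v \<times> ('f, 'v) fterm \<Rightarrow> 'v set set" where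
  "amgu1 VI sh b = (case b of (x, t) \<Rightarrow>
      (sh - rel ({x} \<union> vars t) sh) \<union> bin (star VI (rel {x} sh)) (star VI (rel (vars t) sh)))"

fun amgu :: "'v set \<Rightarrow> 'v set set \<Rightarrow> ('v \<times> ('f, 'v) fterm) list \<Rightarrow> 'v set set" where
  "amgu VI sh [] = sh"
| "amgu VI sh (b # bs) = amgu VI (amgu1 VI sh b) bs"

fun subst_apply :: "('v \<times> ('f, 'v) fterm) list \<Rightarrow> ('f, 'v) fterm \<Rightarrow> ('f, 'v) fterm" where
  "subst_apply \<sigma> (Var x) = (case map_of \<sigma> x of Some t \<Rightarrow> t | None \<Rightarrow> Var x)"
| "subst_apply \<sigma> (Fn f ts) = Fn f (map (subst_apply \<sigma>) ts)"

definition is_Subst :: "'v set \<Rightarrow> ('v \<times> ('f, 'v) fterm) list \<Rightarrow> bool" where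
  "is_Subst VI \<sigma> \<longleftrightarrow> distinct (map fst \<sigma>)
     \<and> (\<forall>(x, t) \<in> set \<sigma>. t \<noteq> Var x \<and> x \<in> VI \<and> vars t \<subseteq> VI)
     \<and> (\<forall>t. subst_apply \<sigma> (subst_apply \<sigma> t) = subst_apply \<sigma> t)"

end

theory Submission
  imports Defs
begin

lemma rho_SG: "rho_TSD VI k sh \<subseteq> SG VI"
  unfolding rho_TSD_def by (rule Collect_subset)

lemma rhoD: "S \<in> rho_TSD VI k sh \<Longrightarrow> T \<subseteq> S \<Longrightarrow> card T < k \<Longrightarrow> S \<subseteq> \<Union>{U \<in> sh. T \<subseteq> U \<and> U \<subseteq> S}"
  unfolding rho_TSD_def by (simp only: mem_Collect_eq)

lemma rhoI:
  assumes "S \<in> SG VI" "\<And>T. T \<subseteq> S \<Longrightarrow> card T < k \<Longrightarrow> S \<subseteq> \<Union>{U \<in> sh. T \<subseteq> U \<and> U \<subseteq> S}"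
  shows "S \<in> rho_TSD VI k sh"
proof -
  have "S = \<Union>{U \<in> sh. T \<subseteq> U \<and> U \<subseteq> S}" if "T \<subseteq> S" "card T < k" for T
  proof (rule equalityI)
    show "S \<subseteq> \<Union>{U \<in> sh. T \<subseteq> U \<and> U \<subseteq> S}" using assms(2) that .
    show "\<Union>{U \<in> sh. T \<subseteq> U \<and> U \<subseteq> S} \<subseteq> S" by (rule Union_least) simp
  qed
  then show ?thesis using assms(1) unfolding rho_TSD_def by (simp only: mem_Collect_eq) simp
qed

lemma rho_ext: "sh \<subseteq> SG VI \<Longrightarrow> sh \<subseteq> rho_TSD VI k sh"
proof
  fix S assume a: "sh \<subseteq> SG VI" "S \<in> sh"
  show "S \<in> rho_TSD VI k sh"
  proof (rule rhoI)
    show "S \<in> SG VI" using a by (rule subsetD)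
    fix T assume "T \<subseteq> S"
    then have "S \<in> {U \<in> sh. T \<subseteq> U \<and> U \<subseteq> S}" using a(2) by simp
    then show "S \<subseteq> \<Union>{U \<in> sh. T \<subseteq> U \<and> U \<subseteq> S}" by (rule Union_upper)
  qed
qed

lemma rho_mono: "sh \<subseteq> sh' \<Longrightarrow> rho_TSD VI k sh \<subseteq> rho_TSD VI k sh'"
proof
  fix S assume a: "sh \<subseteq> sh'" "S \<in> rho_TSD VI k sh"
  show "S \<in> rho_TSD VI k sh'"
  proof (rule rhoI)
    show "S \<in> SG VI" using a(2) rho_SG by (rule subsetD[rotated])
    fix T assume "T \<subseteq> S" "card T < k"
    then have "S \<subseteq> \<Union>{U \<in> sh. T \<subseteq> U \<and> U \<subseteq> S}" using rhoD[OF a(2)] by simp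
    also have "\<dots> \<subseteq> \<Union>{U \<in> sh'. T \<subseteq> U \<and> U \<subseteq> S}" using a(1) by (intro Union_mono) blast
    finally show "S \<subseteq> \<Union>{U \<in> sh'. T \<subseteq> U \<and> U \<subseteq> S}" .
  qed
qed

lemma rho_idem: "rho_TSD VI k (rho_TSD VI k sh) \<subseteq> rho_TSD VI k sh"
proof
  fix S assume S: "S \<in> rho_TSD VI k (rho_TSD VI k sh)"
  show "S \<in> rho_TSD VI k sh"
  proof (rule rhoI)
    show "S \<in> SG VI" using S rho_SG by (rule subsetD[rotated])
    fix T assume T: "T \<subseteq> S" "card T < k"
    have e: "S \<subseteq> \<Union>{U \<in> rho_TSD VI k sh. T \<subseteq> U \<and> U \<subseteq> S}"
      using rhoD[OF S T] .
    show "S \<subseteq> \<Union>{U \<in> sh. T \<subseteq> U \<and> U \<subseteq> S}"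
    proof
      fix y assume "y \<in> S"
      then have "y \<in> \<Union>{U \<in> rho_TSD VI k sh. T \<subseteq> U \<and> U \<subseteq> S}" using e by (rule subsetD[rotated])
      then obtain U where U: "U \<in> rho_TSD VI k sh" "T \<subseteq> U" "U \<subseteq> S" "y \<in> U"
        by (auto simp only: Union_iff mem_Collect_eq)
      have "U \<subseteq> \<Union>{V \<in> sh. T \<subseteq> V \<and> V \<subseteq> U}" using rhoD[OF U(1,2) T(2)] .
      then have "y \<in> \<Union>{V \<in> sh. T \<subseteq> V \<and> V \<subseteq> U}" using U(4) by (rule subsetD)
      then obtain V where "V \<in> sh" "T \<subseteq> V" "V \<subseteq> U" "y \<in> V"
        by (auto simp only: Union_iff mem_Collect_eq)
      then show "y \<in> \<Union>{U \<in> sh. T \<subseteq> U \<and> U \<subseteq> S}" using U(3) by blast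
    qed
  qed
qed

lemma amgu1_mono: "sh \<subseteq> sh' \<Longrightarrow> amgu1 VI sh b \<subseteq> amgu1 VI sh' b"
proof -
  assume a: "sh \<subseteq> sh'"
  have r: "rel V sh \<subseteq> rel V sh'" for V using a unfolding rel_def by auto
  have s: "star VI (rel V sh) \<subseteq> star VI (rel V sh')" for V
    using r unfolding star_def by blast
  have "bin (star VI (rel V sh)) (star VI (rel V' sh)) \<subseteq> bin (star VI (rel V sh')) (star VI (rel V' sh'))" for V V'
    using s unfolding bin_def by blast
  moreover have "sh - rel V sh \<subseteq> sh' - rel V sh'" for V using a unfolding rel_def by auto
  ultimately show ?thesis by (cases b) (simp only: amgu1_def prod.case, blast)
qed

lemma amgu1_SG: "sh \<subseteq> SG VI \<Longrightarrow> amgu1 VI sh b \<subseteq> SG VI"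
  unfolding amgu1_def rel_def bin_def star_def SG_def
  by (cases b) auto

lemma cover0:
  assumes "W \<in> rho_TSD VI k sh" "z \<in> W" "1 \<le> k"
  shows "\<exists>V\<in>sh. z \<in> V \<and> V \<subseteq> W"
proof -
  have c: "card {} < k" using assms(3) by simp
  have "W \<subseteq> \<Union>{U \<in> sh. {} \<subseteq> U \<and> U \<subseteq> W}"
    by (rule rhoD[OF assms(1) _ c]) blast
  then show ?thesis using assms(2) by blast
qed

lemma cover1:
  assumes "W \<in> rho_TSD VI k sh" "z \<in> W" "a \<in> W" "2 \<le> k"
  shows "\<exists>V\<in>sh. a \<in> V \<and> z \<in> V \<and> V \<subseteq> W"
proof -
  have c: "card {a} < k" using assms(4) by simp
  have "W \<subseteq> \<Union>{U \<in> sh. {a} \<subseteq> U \<and> U \<subseteq> W}"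
    by (rule rhoD[OF assms(1) _ c]) (use assms(3) in blast)
  then show ?thesis using assms(2) by blast
qed

lemma starI: "F \<subseteq> sh \<Longrightarrow> \<Union>F \<in> SG VI \<Longrightarrow> \<Union>F \<in> star VI sh"
  unfolding star_def by blast

lemma binI: "a \<in> A \<Longrightarrow> b \<in> B \<Longrightarrow> a \<union> b \<in> bin A B"
  unfolding bin_def by blast

lemma binE: "S \<in> bin A B \<Longrightarrow> (\<And>a b. S = a \<union> b \<Longrightarrow> a \<in> A \<Longrightarrow> b \<in> B \<Longrightarrow> P) \<Longrightarrow> P"
  unfolding bin_def by blast

lemma starE: "S \<in> star VI sh \<Longrightarrow> (\<And>F. S \<in> SG VI \<Longrightarrow> F \<subseteq> sh \<Longrightarrow> S = \<Union>F \<Longrightarrow> P) \<Longrightarrow> P"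
  unfolding star_def by blast

lemma amgu1_eq: "amgu1 VI sh (x, t) = (sh - rel ({x} \<union> vars t) sh) \<union> bin (star VI (rel {x} sh)) (star VI (rel (vars t) sh))"
  unfolding amgu1_def by simp

lemma key:
  assumes fin: "finite VI" and shG: "sh \<subseteq> SG VI" and k: "1 \<le> k"
  shows "amgu1 VI (rho_TSD VI k sh) (x, t) \<subseteq> rho_TSD VI k (amgu1 VI sh (x, t))"
proof
  let ?A = "amgu1 VI sh (x, t)"
  let ?R = "rho_TSD VI k sh"
  let ?v = "{x} \<union> vars t"
  fix S assume S: "S \<in> amgu1 VI ?R (x, t)"
  have SG: "S \<in> SG VI" using subsetD[OF amgu1_SG[OF rho_SG] S] .
  then have "S \<subseteq> VI" unfolding SG_def by blast
  then have finS: "finite S" using fin by (rule finite_subset)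
  show "S \<in> rho_TSD VI k ?A"
  proof (cases "S \<in> ?R - rel ?v ?R")
    case True
    then have SR: "S \<in> ?R" and nr: "S \<notin> rel ?v ?R" by simp_all
    then have dis: "S \<inter> ?v = {}" unfolding rel_def by blast
    show ?thesis
    proof (rule rhoI)
      show "S \<in> SG VI" by fact
      fix T assume T: "T \<subseteq> S" "card T < k"
      have e: "S \<subseteq> \<Union>{U \<in> sh. T \<subseteq> U \<and> U \<subseteq> S}" using rhoD[OF SR T] .
      have "{U \<in> sh. T \<subseteq> U \<and> U \<subseteq> S} \<subseteq> {U \<in> ?A. T \<subseteq> U \<and> U \<subseteq> S}"
      proof
        fix U assume U: "U \<in> {U \<in> sh. T \<subseteq> U \<and> U \<subseteq> S}"
        then have U': "U \<in> sh" "T \<subseteq> U" "U \<subseteq> S" by simp_all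
        have "U \<notin> rel ?v sh" unfolding rel_def using dis U'(3) by blast
        then have "U \<in> ?A" unfolding amgu1_eq using U'(1) by blast
        then show "U \<in> {U \<in> ?A. T \<subseteq> U \<and> U \<subseteq> S}" using U' by simp
      qed
      then show "S \<subseteq> \<Union>{U \<in> ?A. T \<subseteq> U \<and> U \<subseteq> S}" by (rule order_trans[OF e Union_mono])
    qed
  next
    case False
    then have "S \<in> bin (star VI (rel {x} ?R)) (star VI (rel (vars t) ?R))"
      using S unfolding amgu1_eq by blast
    then obtain S1 S2 where SS: "S = S1 \<union> S2" and S1s: "S1 \<in> star VI (rel {x} ?R)"
      and S2s: "S2 \<in> star VI (rel (vars t) ?R)" by (rule binE)
    from S1s obtain F1 where S1: "S1 \<in> SG VI" "F1 \<subseteq> rel {x} ?R" "S1 = \<Union>F1" by (rule starE)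
    from S2s obtain F2 where S2: "S2 \<in> SG VI" "F2 \<subseteq> rel (vars t) ?R" "S2 = \<Union>F2" by (rule starE)
    have F1S: "W \<subseteq> S" if "W \<in> F1" for W using that S1(3) SS by blast
    have F2S: "W \<subseteq> S" if "W \<in> F2" for W using that S2(3) SS by blast
    have F1R: "W \<in> ?R \<and> x \<in> W" if "W \<in> F1" for W using that S1(2) unfolding rel_def by blast
    have F2R: "W \<in> ?R \<and> W \<inter> vars t \<noteq> {}" if "W \<in> F2" for W using that S2(2) unfolding rel_def by blast
    define P where "P = {V \<in> rel {x} sh. V \<subseteq> S}"
    define Q where "Q = {V \<in> rel (vars t) sh. V \<subseteq> S}"
    define U0 where "U0 = \<Union>P \<union> \<Union>Q"
    have "\<Union>F1 \<noteq> {}" using S1(1) unfolding S1(3) SG_def by blast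
    then obtain W1 where W1: "W1 \<in> F1" by blast
    then have "x \<in> W1" "W1 \<in> ?R" using F1R by auto
    then obtain Vx where Vx: "Vx \<in> sh" "x \<in> Vx" "Vx \<subseteq> W1" using cover0[of W1 VI k sh x] k by blast
    have VxP: "Vx \<in> P" using Vx F1S[OF W1] unfolding P_def rel_def by auto
    have "\<Union>F2 \<noteq> {}" using S2(1) unfolding S2(3) SG_def by blast
    then obtain W2 where W2: "W2 \<in> F2" by blast
    then obtain w where w: "w \<in> W2" "w \<in> vars t" "W2 \<in> ?R" using F2R by blast
    then obtain Vw where Vw: "Vw \<in> sh" "w \<in> Vw" "Vw \<subseteq> W2" using cover0[of W2 VI k sh w] k by blast
    have VwQ: "Vw \<in> Q" using Vw F2S[OF W2] w unfolding Q_def rel_def by auto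
    have U0S: "U0 \<subseteq> S" unfolding U0_def P_def Q_def by auto
    have SVI: "S \<subseteq> VI" using SG unfolding SG_def by blast
    have "\<Union>P \<in> star VI (rel {x} sh)"
    proof (rule starI)
      show "P \<subseteq> rel {x} sh" unfolding P_def by blast
      have "\<Union>P \<subseteq> VI" "Vx \<subseteq> \<Union>P" "Vx \<noteq> {}" using SVI VxP Vx(2) unfolding P_def by auto
      then show "\<Union>P \<in> SG VI" unfolding SG_def by blast
    qed
    moreover have "\<Union>Q \<in> star VI (rel (vars t) sh)"
    proof (rule starI)
      show "Q \<subseteq> rel (vars t) sh" unfolding Q_def by blast
      have "\<Union>Q \<subseteq> VI" "Vw \<subseteq> \<Union>Q" "Vw \<noteq> {}" using SVI VwQ Vw(2) unfolding Q_def by auto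
      then show "\<Union>Q \<in> SG VI" unfolding SG_def by blast
    qed
    ultimately have U0A: "U0 \<in> ?A" unfolding amgu1_eq U0_def by (blast intro: binI)
    have cov: "\<exists>V\<in>sh. y \<in> V \<and> V \<subseteq> S" if yS: "y \<in> S" for y
    proof -
      have "y \<in> \<Union>F1 \<union> \<Union>F2" using yS unfolding SS S1(3) S2(3) .
      then obtain W where "W \<in> F1 \<union> F2" "y \<in> W" by blast
      moreover then have "W \<in> ?R" "W \<subseteq> S" using F1R F2R F1S F2S by (blast, blast)
      ultimately show ?thesis using cover0[of W VI k sh y] k by blast
    qed
    show ?thesis
    proof (rule rhoI)
      show "S \<in> SG VI" by fact
      fix T assume T: "T \<subseteq> S" "card T < k"
      show "S \<subseteq> \<Union>{U \<in> ?A. T \<subseteq> U \<and> U \<subseteq> S}"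
      proof (cases "T = {}")
        case True
        have "S \<subseteq> \<Union>{U \<in> ?A. U \<subseteq> S}"
        proof
          fix y assume "y \<in> S"
          then obtain V where V: "V \<in> sh" "y \<in> V" "V \<subseteq> S" using cov[of y] by blast
          show "y \<in> \<Union>{U \<in> ?A. U \<subseteq> S}"
          proof (cases "V \<inter> ?v = {}")
            case True
            then have "V \<notin> rel ?v sh" unfolding rel_def by blast
            then have "V \<in> ?A" using V(1) unfolding amgu1_eq by blast
            then have "V \<in> {U \<in> ?A. U \<subseteq> S}" using V(3) by simp
            then show ?thesis by (rule UnionI[OF _ V(2)])
          next
            case False
            then have "V \<inter> {x} \<noteq> {} \<or> V \<inter> vars t \<noteq> {}" by blast
            then have "V \<in> P \<or> V \<in> Q" using V(1,3) unfolding P_def Q_def rel_def by blast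
            then have "y \<in> U0" using V(2) unfolding U0_def by blast
            moreover have "U0 \<in> {U \<in> ?A. U \<subseteq> S}" using U0A U0S by simp
            ultimately show ?thesis by (blast intro: UnionI)
          qed
        qed
        then show ?thesis unfolding True by simp
      next
        case False
        moreover have "finite T" using finS T(1) by (rule finite_subset[rotated])
        ultimately have "card T > 0" by (simp add: card_gt_0_iff)
        then have k2: "2 \<le> k" using T by linarith
        have "S \<subseteq> U0"
        proof
          fix y assume "y \<in> S"
          then have "y \<in> \<Union>F1 \<union> \<Union>F2" unfolding SS S1(3) S2(3) .
          then obtain W where W: "W \<in> F1 \<union> F2" "y \<in> W" by blast
          then have WR: "W \<in> ?R" and WS: "W \<subseteq> S" using F1R F2R F1S F2S by (blast, blast)
          show "y \<in> U0"
          proof (cases "W \<in> F1")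
            case True
            then have "x \<in> W" using F1R by auto
            then obtain V where "V \<in> sh" "x \<in> V" "y \<in> V" "V \<subseteq> W" using cover1[OF WR W(2) _ k2] by blast
            then have "V \<in> P" using WS unfolding P_def rel_def by blast
            then show ?thesis using \<open>y \<in> V\<close> unfolding U0_def by blast
          next
            case False
            then have "W \<in> F2" using W by auto
            then obtain a where "a \<in> W" "a \<in> vars t" using F2R by blast
            then obtain V where "V \<in> sh" "a \<in> V" "y \<in> V" "V \<subseteq> W" using cover1[OF WR W(2) _ k2] by blast
            then have "V \<in> Q" using WS \<open>a \<in> vars t\<close> unfolding Q_def rel_def by blast
            then show ?thesis using \<open>y \<in> V\<close> unfolding U0_def by blast
          qed
        qed
        then have "S = U0" using U0S by (rule equalityI)
        then have "S \<in> ?A" using U0A by simp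
        then have "S \<in> {U \<in> ?A. T \<subseteq> U \<and> U \<subseteq> S}" using T(1) by simp
        then show ?thesis by (rule Union_upper)
      qed
    qed
  qed
qed

lemma rho_amgu1:
  assumes "finite VI" "sh \<subseteq> SG VI" "1 \<le> k"
  shows "rho_TSD VI k (amgu1 VI (rho_TSD VI k sh) b) = rho_TSD VI k (amgu1 VI sh b)"
proof -
  obtain x t where b: "b = (x, t)" by (cases b)
  have "rho_TSD VI k (amgu1 VI (rho_TSD VI k sh) b) \<subseteq> rho_TSD VI k (rho_TSD VI k (amgu1 VI sh b))"
    unfolding b by (rule rho_mono[OF key[OF assms]])
  also have "\<dots> \<subseteq> rho_TSD VI k (amgu1 VI sh b)" by (rule rho_idem)
  finally have 1: "rho_TSD VI k (amgu1 VI (rho_TSD VI k sh) b) \<subseteq> rho_TSD VI k (amgu1 VI sh b)" .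
  have 2: "rho_TSD VI k (amgu1 VI sh b) \<subseteq> rho_TSD VI k (amgu1 VI (rho_TSD VI k sh) b)"
    by (rule rho_mono[OF amgu1_mono[OF rho_ext[OF assms(2)]]])
  show ?thesis using 1 2 by (rule equalityI)
qed

lemma main:
  assumes "finite VI" "1 \<le> k"
  shows "sh \<subseteq> SG VI \<Longrightarrow> sh' \<subseteq> SG VI \<Longrightarrow> rho_TSD VI k sh = rho_TSD VI k sh'
    \<Longrightarrow> rho_TSD VI k (amgu VI sh \<sigma>) = rho_TSD VI k (amgu VI sh' \<sigma>)"
proof (induction \<sigma> arbitrary: sh sh')
  case Nil
  then show ?case by (simp only: amgu.simps)
next
  case (Cons b bs)
  have "rho_TSD VI k (amgu1 VI sh b) = rho_TSD VI k (amgu1 VI (rho_TSD VI k sh) b)"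
    using rho_amgu1[OF assms(1) Cons.prems(1) assms(2)] by (rule sym)
  also have "\<dots> = rho_TSD VI k (amgu1 VI (rho_TSD VI k sh') b)" unfolding Cons.prems(3) ..
  also have "\<dots> = rho_TSD VI k (amgu1 VI sh' b)" by (rule rho_amgu1[OF assms(1) Cons.prems(2) assms(2)])
  finally have e: "rho_TSD VI k (amgu1 VI sh b) = rho_TSD VI k (amgu1 VI sh' b)" .
  have "rho_TSD VI k (amgu VI (amgu1 VI sh b) bs) = rho_TSD VI k (amgu VI (amgu1 VI sh' b) bs)"
    by (rule Cons.IH[OF amgu1_SG[OF Cons.prems(1)] amgu1_SG[OF Cons.prems(2)] e])
  then show ?case by (simp only: amgu.simps)
qed

theorem lemma3p20:
  fixes VI :: "'v set" and n k :: nat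
    and sh1 sh2 :: "'v set set" and \<sigma> :: "('v \<times> ('f, 'v) fterm) list"
  assumes "finite VI" and "card VI = n"
    and "sh1 \<in> SH VI" and "sh2 \<in> SH VI"
    and "is_Subst VI \<sigma>"
    and "1 \<le> k" and "k \<le> n"
    and "rho_TSD VI k sh1 = rho_TSD VI k sh2"
  shows "rho_TSD VI k (amgu VI sh1 \<sigma>) = rho_TSD VI k (amgu VI sh2 \<sigma>)"
proof -
  have "sh1 \<subseteq> SG VI" "sh2 \<subseteq> SG VI" using assms(3,4) unfolding SH_def by simp_all
  then show ?thesis by (rule main[OF assms(1) assms(6) _ _ assms(8)])
qed

end
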